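(* Let $t\ge 1$ and let $K_{2*t}$ denote the complete multipartite graph with $t$ parts each of size $2$. If $G$ is a subgraph of $K_{2*t}$, then $G$ is $f$-AT for the constant function $f\equiv t$. Consequently, if $G$ is BK-free, then $G$ is not a subgraph of $K_{2*(\Delta(G)-1)}$.
   Context: For a graph $G$ and $f:V(G)\to\mathbb{Z}^+$, an orientation $D$ of $E(G)$ is an Alon--Tarsi orientation for $f$ if $d^+_D(v)<f(v)$ for every vertex $v$ and the number of spanning Eulerian subgraphs of $D$ (spanning subdigraphs in which every vertex has equal in- and out-degree) with an even number of edges differs from the number with an odd number of edges; $G$ is $f$-AT if such an orientation exists. A digraph (in which some edges may be oriented in both directions) is kernel-perfect if every induced subdigraph $D'$ has a kernel, i.e., a set $I\subseteq V(D')$ with no arc between two of its vertices such that every vertex of $D'$ not in $I$ has an out-neighbor in $I$. A graph $H$ is $f$-KP if some supergraph $H'$ of $H$ on the same vertex set (possibly with parallel edges) has a kernel-perfect orientation with $d^+(v)<f(v)$ for all $v$. A connected graph $G$ is BK-free if it has no induced subgraph $H$ that is $f_H$-AT or $f_H$-KP, where $f_H(v)=d_H(v)-1+\Delta(G)-d_G(v)$ for $v\in V(H)$. *)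

theory Defs
  imports Main
begin

definition graph :: "'a set \<Rightarrow> 'a set set \<Rightarrow> bool" where
  "graph V E \<longleftrightarrow> finite V \<and> (\<forall>e\<in>E. \<exists>u v. e = {u, v} \<and> u \<noteq> v \<and> u \<in> V \<and> v \<in> V)"

definition degree :: "'a set set \<Rightarrow> 'a \<Rightarrow> nat" where
  "degree E v = card {e \<in> E. v \<in> e}"

definition maxdeg :: "'a set \<Rightarrow> 'a set set \<Rightarrow> nat" where
  "maxdeg V E = Max (degree E ` V)"

definition connected_graph :: "'a set \<Rightarrow> 'a set set \<Rightarrow> bool" where
  "connected_graph V E \<longleftrightarrow> V \<noteq> {} \<and>
     (\<forall>u\<in>V. \<forall>v\<in>V. (u, v) \<in> {(x, y). {x, y} \<in> E}\<^sup>*)"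

definition induced_edges :: "'a set set \<Rightarrow> 'a set \<Rightarrow> 'a set set" where
  "induced_edges E W = {e \<in> E. e \<subseteq> W}"

definition orientation :: "'a set set \<Rightarrow> ('a \<times> 'a) set \<Rightarrow> bool" where
  "orientation E D \<longleftrightarrow>
     (\<forall>u v. (u, v) \<in> D \<longrightarrow> {u, v} \<in> E \<and> (v, u) \<notin> D) \<and>
     (\<forall>u v. {u, v} \<in> E \<longrightarrow> (u, v) \<in> D \<or> (v, u) \<in> D)"

definition outdeg :: "('a \<times> 'a) set \<Rightarrow> 'a \<Rightarrow> nat" where
  "outdeg D v = card {w. (v, w) \<in> D}"

definition indeg :: "('a \<times> 'a) set \<Rightarrow> 'a \<Rightarrow> nat" where
  "indeg D v = card {w. (w, v) \<in> D}"

definition eulerian_sub :: "('a \<times> 'a) set \<Rightarrow> ('a \<times> 'a) set \<Rightarrow> bool" where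
  "eulerian_sub D S \<longleftrightarrow> S \<subseteq> D \<and> (\<forall>v. indeg S v = outdeg S v)"

definition AT_orientation :: "'a set \<Rightarrow> 'a set set \<Rightarrow> ('a \<Rightarrow> int) \<Rightarrow> ('a \<times> 'a) set \<Rightarrow> bool" where
  "AT_orientation V E f D \<longleftrightarrow> orientation E D \<and>
     (\<forall>v\<in>V. int (outdeg D v) < f v) \<and>
     card {S. eulerian_sub D S \<and> even (card S)} \<noteq> card {S. eulerian_sub D S \<and> odd (card S)}"

definition f_AT :: "'a set \<Rightarrow> 'a set set \<Rightarrow> ('a \<Rightarrow> int) \<Rightarrow> bool" where
  "f_AT V E f \<longleftrightarrow> (\<exists>D. AT_orientation V E f D)"

definition kernel_perfect :: "'a set \<Rightarrow> ('a \<Rightarrow> 'a \<Rightarrow> bool) \<Rightarrow> bool" where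
  "kernel_perfect V A \<longleftrightarrow>
     (\<forall>W \<subseteq> V. \<exists>I \<subseteq> W. (\<forall>x\<in>I. \<forall>y\<in>I. \<not> A x y) \<and> (\<forall>w \<in> W - I. \<exists>i\<in>I. A w i))"

text \<open>f-KP: an orientation (edges possibly oriented both ways) of a multigraph supergraph H'
  of (V,E) on the same vertex set, encoded by arc multiplicities c u v (number of arcs u to v).
  Every edge of E occurs in H', so receives at least one arc; out-degree counts multiplicities.\<close>
definition f_KP :: "'a set \<Rightarrow> 'a set set \<Rightarrow> ('a \<Rightarrow> int) \<Rightarrow> bool" where
  "f_KP V E f \<longleftrightarrow> (\<exists>c :: 'a \<Rightarrow> 'a \<Rightarrow> nat.
     (\<forall>u v. 0 < c u v \<longrightarrow> u \<in> V \<and> v \<in> V \<and> u \<noteq> v) \<and>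
     (\<forall>u v. {u, v} \<in> E \<longrightarrow> 1 \<le> c u v + c v u) \<and>
     kernel_perfect V (\<lambda>u v. 0 < c u v) \<and>
     (\<forall>v\<in>V. int (\<Sum>w\<in>V. c v w) < f v))"

definition BK_free :: "'a set \<Rightarrow> 'a set set \<Rightarrow> bool" where
  "BK_free V E \<longleftrightarrow> connected_graph V E \<and>
     \<not> (\<exists>W. W \<subseteq> V \<and> W \<noteq> {} \<and>
          (let EH = induced_edges E W;
               fH = (\<lambda>v. int (degree EH v) - 1 + int (maxdeg V E) - int (degree E v))
           in f_AT W EH fH \<or> f_KP W EH fH))"

text \<open>(V,E) is (isomorphic to) a subgraph of K_{2*t}, the complete t-partite graph
  with parts {i} x {0,1}.\<close>
definition subgraph_K2t :: "'a set \<Rightarrow> 'a set set \<Rightarrow> nat \<Rightarrow> bool" where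
  "subgraph_K2t V E t \<longleftrightarrow> (\<exists>\<phi> :: 'a \<Rightarrow> nat \<times> nat.
     inj_on \<phi> V \<and> \<phi> ` V \<subseteq> {0..<t} \<times> {0..<2} \<and>
     (\<forall>u v. {u, v} \<in> E \<longrightarrow> fst (\<phi> u) \<noteq> fst (\<phi> v)))"

end

theory Submission
  imports Defs "HOL-Library.FuncSet" "HOL-Computational_Algebra.Polynomial"
begin


definition wfE :: "'v set set \<Rightarrow> bool" where
  "wfE E \<longleftrightarrow> finite E \<and> (\<forall>e\<in>E. \<exists>u v. e = {u,v} \<and> u \<noteq> v)"

definition arcsE :: "'v set set \<Rightarrow> ('v \<times> 'v) set" where
  "arcsE E = {(u,v). {u,v} \<in> E}"

lemma finite_arcsE: assumes "wfE E" shows "finite (arcsE E)"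
proof -
  have fU: "finite (\<Union>E)" using assms unfolding wfE_def by fastforce
  have "arcsE E \<subseteq> (\<Union>E) \<times> (\<Union>E)" unfolding arcsE_def by auto
  thus ?thesis using fU by (meson finite_SigmaI finite_subset)
qed

lemma ori_sub: "orientation E D \<Longrightarrow> D \<subseteq> arcsE E"
  unfolding orientation_def arcsE_def by auto

lemma finite_ori: "wfE E \<Longrightarrow> orientation E D \<Longrightarrow> finite D"
  using finite_arcsE ori_sub finite_subset by metis

lemma finite_out: "finite D \<Longrightarrow> finite {w. (v,w) \<in> D}"
proof -
  assume "finite D"
  hence "finite (snd ` D)" by simp
  moreover have "{w. (v,w) \<in> D} \<subseteq> snd ` D" by force
  ultimately show ?thesis using finite_subset by blast
qed

lemma finite_in: "finite D \<Longrightarrow> finite {w. (w,v) \<in> D}"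
proof -
  assume "finite D"
  hence "finite (fst ` D)" by simp
  moreover have "{w. (w,v) \<in> D} \<subseteq> fst ` D" by force
  ultimately show ?thesis using finite_subset by blast
qed

lemma card_converse: "card (converse A) = card A"
proof -
  have "converse A = (\<lambda>(x,y). (y,x)) ` A" by auto
  moreover have "inj_on (\<lambda>(x,y). (y,x)) A" by (auto simp: inj_on_def)
  ultimately show ?thesis by (simp add: card_image)
qed

definition flip :: "('v \<times> 'v) set \<Rightarrow> ('v \<times> 'v) set \<Rightarrow> ('v \<times> 'v) set" where
  "flip D S = (D - S) \<union> converse S"

lemma ori_asym: "orientation E D \<Longrightarrow> (u,v) \<in> D \<Longrightarrow> (v,u) \<notin> D"
  unfolding orientation_def by auto

lemma ori_edge: "orientation E D \<Longrightarrow> (u,v) \<in> D \<Longrightarrow> {u,v} \<in> E"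
  unfolding orientation_def by auto

lemma ori_cover: "orientation E D \<Longrightarrow> {u,v} \<in> E \<Longrightarrow> (u,v) \<in> D \<or> (v,u) \<in> D"
  unfolding orientation_def by auto

lemma flip_ori: assumes "orientation E D" "S \<subseteq> D" shows "orientation E (flip D S)"
  unfolding orientation_def flip_def
proof (rule conjI; intro allI impI)
  fix u v assume a: "(u,v) \<in> D - S \<union> S\<inverse>"
  show "{u,v} \<in> E \<and> (v,u) \<notin> D - S \<union> S\<inverse>"
  proof (cases "(u,v) \<in> D - S")
    case True
    then show ?thesis using assms ori_asym[OF assms(1)] ori_edge[OF assms(1)] by auto
  next
    case False
    then have "(v,u) \<in> S" using a by auto
    then have "(v,u) \<in> D" using assms by auto
    then have "{v,u} \<in> E" "(u,v) \<notin> D" using ori_asym[OF assms(1)] ori_edge[OF assms(1)] by auto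
    then show ?thesis using \<open>(v,u) \<in> S\<close> assms by (auto simp: insert_commute)
  qed
next
  fix u v assume "{u,v} \<in> E"
  then show "(u, v) \<in> D - S \<union> S\<inverse> \<or> (v, u) \<in> D - S \<union> S\<inverse>"
    using ori_cover[OF assms(1)] by blast
qed

lemma flip_back: assumes "orientation E D" "S \<subseteq> D" shows "D - flip D S = S"
  using assms ori_asym[OF assms(1)] unfolding flip_def by auto

lemma flip_inv: assumes "orientation E D" "orientation E Q" shows "flip D (D - Q) = Q"
proof -
  have "(v,u) \<in> D \<and> (v,u) \<notin> Q" if "(u,v) \<in> Q" "(u,v) \<notin> D" for u v
  proof -
    have "{u,v} \<in> E" using ori_edge[OF assms(2) that(1)] .
    thus ?thesis using ori_cover[OF assms(1)] ori_asym[OF assms(2) that(1)] that(2) by blast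
  qed
  moreover have "(u,v) \<in> Q" if "(v,u) \<in> D" "(v,u) \<notin> Q" for u v
  proof -
    have "{v,u} \<in> E" using ori_edge[OF assms(1) that(1)] .
    hence "{u,v} \<in> E" by (simp add: insert_commute)
    thus ?thesis using ori_cover[OF assms(2)] that(2) by blast
  qed
  ultimately show ?thesis unfolding flip_def by auto
qed

lemma outdeg_flip:
  assumes "orientation E D" "S \<subseteq> D" "finite D"
  shows "outdeg (flip D S) v + outdeg S v = outdeg D v + indeg S v"
proof -
  have fS: "finite S" using assms finite_subset by blast
  have eq: "{w. (v,w) \<in> flip D S} = ({w. (v,w) \<in> D} - {w. (v,w) \<in> S}) \<union> {w. (w,v) \<in> S}"
    unfolding flip_def by auto
  have disj: "({w. (v,w) \<in> D} - {w. (v,w) \<in> S}) \<inter> {w. (w,v) \<in> S} = {}"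
    using assms ori_asym[OF assms(1)] by auto
  have "outdeg (flip D S) v = card ({w. (v,w) \<in> D} - {w. (v,w) \<in> S}) + indeg S v"
    unfolding outdeg_def indeg_def eq
    by (rule card_Un_disjoint) (use finite_out[OF assms(3)] finite_in[OF fS] disj in auto)
  moreover have "card ({w. (v,w) \<in> D} - {w. (v,w) \<in> S}) + outdeg S v = outdeg D v"
  proof -
    have sub: "{w. (v,w) \<in> S} \<subseteq> {w. (v,w) \<in> D}" using assms by auto
    show ?thesis unfolding outdeg_def
      using card_Diff_subset[OF finite_out[OF fS] sub] card_mono[OF finite_out[OF assms(3)] sub] by simp
  qed
  ultimately show ?thesis by linarith
qed

lemma outdeg_diff_split:
  assumes "orientation E D" "orientation E Q" "finite D" "finite Q"
  shows "outdeg Q v + outdeg (D - Q) v = outdeg D v + indeg (D - Q) v"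
proof -
  have "outdeg (flip D (D - Q)) v + outdeg (D - Q) v = outdeg D v + indeg (D - Q) v"
    by (rule outdeg_flip) (use assms in auto)
  thus ?thesis using flip_inv[OF assms(1,2)] by simp
qed

lemma card_flip_sign:
  assumes "orientation E D" "orientation E R" "S \<subseteq> D" "finite D"
  shows "((-1::real) ^ card (flip D S - R)) = (-1) ^ card (D - R) * (-1) ^ card S"
proof -
  have fS: "finite S" using assms finite_subset by blast
  have e1: "flip D S - R = ((D - R) - (S - R)) \<union> converse (S \<inter> R)"
  proof -
    have "\<And>u v. (v,u) \<in> S \<Longrightarrow> ((u,v) \<in> R \<longleftrightarrow> (v,u) \<notin> R)"
      proof -
      fix u v assume "(v,u) \<in> S"
      hence "(v,u) \<in> D" using assms by auto
      hence "{v,u} \<in> E" using ori_edge[OF assms(1)] by blast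
      hence "{u,v} \<in> E" by (simp add: insert_commute)
      thus "((u,v) \<in> R \<longleftrightarrow> (v,u) \<notin> R)" using ori_cover[OF assms(2)] ori_asym[OF assms(2)] by blast
    qed
    thus ?thesis unfolding flip_def by auto
  qed
  have disj: "((D - R) - (S - R)) \<inter> converse (S \<inter> R) = {}"
    using assms ori_asym[OF assms(1)] by auto
  have c1: "card (flip D S - R) = card ((D - R) - (S - R)) + card (S \<inter> R)"
    unfolding e1 by (subst card_Un_disjoint) (use assms fS disj in \<open>auto simp: card_converse\<close>)
  have c2: "card ((D - R) - (S - R)) + card (S - R) = card (D - R)"
  proof -
    have sub: "S - R \<subseteq> D - R" using assms by auto
    have "finite (D - R)" using assms by auto
    thus ?thesis using card_Diff_subset[OF _ sub] card_mono[OF _ sub] fS by simp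
  qed
  have c3: "card S = card (S \<inter> R) + card (S - R)"
    using fS by (metis card_Int_Diff)
  have "card (flip D S - R) + 2 * card (S - R) = card (D - R) + card S"
    using c1 c2 c3 by linarith
  hence "((-1::real) ^ card (flip D S - R)) * ((-1)^(2 * card (S-R))) = (-1) ^ card (D - R) * (-1) ^ card S"
    by (metis power_add)
  thus ?thesis by (simp add: power_mult)
qed


definition CL :: "'v set set \<Rightarrow> ('v\<times>'v) set \<Rightarrow> ('v\<times>'v) set \<Rightarrow> ('v\<times>'v) set set" where
  "CL E D T = {Q. orientation E Q \<and> (\<forall>v. outdeg Q v = outdeg D v) \<and> D - T \<subseteq> Q}"

lemma sum_sign_eulerian:
  assumes "finite T"
  shows "(\<Sum>S\<in>{S. eulerian_sub T S}. (-1::real) ^ card S) =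
         real (card {S. eulerian_sub T S \<and> even (card S)}) - real (card {S. eulerian_sub T S \<and> odd (card S)})"
proof -
  have fin: "finite {S. eulerian_sub T S}"
    by (rule finite_subset[of _ "Pow T"]) (use assms in \<open>auto simp: eulerian_sub_def\<close>)
  have split: "{S. eulerian_sub T S} = {S. eulerian_sub T S \<and> even (card S)} \<union> {S. eulerian_sub T S \<and> odd (card S)}"
    by auto
  have f1: "finite {S. eulerian_sub T S \<and> even (card S)}" by (rule finite_subset[OF _ fin]) auto
  have f2: "finite {S. eulerian_sub T S \<and> odd (card S)}" by (rule finite_subset[OF _ fin]) auto
  have "(\<Sum>S\<in>{S. eulerian_sub T S}. (-1::real) ^ card S) =
     (\<Sum>S\<in>{S. eulerian_sub T S \<and> even (card S)}. (-1::real) ^ card S) +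
     (\<Sum>S\<in>{S. eulerian_sub T S \<and> odd (card S)}. (-1::real) ^ card S)"
    by (subst split, rule sum.union_disjoint) (use f1 f2 in auto)
  also have "(\<Sum>S\<in>{S. eulerian_sub T S \<and> even (card S)}. (-1::real) ^ card S) =
      (\<Sum>S\<in>{S. eulerian_sub T S \<and> even (card S)}. 1)"
    by (rule sum.cong) auto
  also have "(\<Sum>S\<in>{S. eulerian_sub T S \<and> odd (card S)}. (-1::real) ^ card S) =
      (\<Sum>S\<in>{S. eulerian_sub T S \<and> odd (card S)}. -1)"
    by (rule sum.cong) auto
  finally show ?thesis by simp
qed

lemma classA:
  assumes "wfE E" "orientation E D" "orientation E R" "T \<subseteq> D"
  shows "(\<Sum>Q\<in>CL E D T. (-1::real) ^ card (Q - R)) =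
     (-1) ^ card (D - R) * (real (card {S. eulerian_sub T S \<and> even (card S)}) - real (card {S. eulerian_sub T S \<and> odd (card S)}))"
proof -
  have fD: "finite D" using finite_ori assms by blast
  have fT: "finite T" using fD assms finite_subset by blast
  have "(\<Sum>S\<in>{S. eulerian_sub T S}. (-1::real) ^ card (flip D S - R)) = (\<Sum>Q\<in>CL E D T. (-1::real) ^ card (Q - R))"
  proof (rule sum.reindex_bij_witness[where i="\<lambda>Q. D - Q" and j="flip D"])
    fix S assume S: "S \<in> {S. eulerian_sub T S}"
    hence SD: "S \<subseteq> D" "S \<subseteq> T" using assms unfolding eulerian_sub_def by auto
    show "D - flip D S = S" using flip_back[OF assms(2) SD(1)] .
    have "outdeg (flip D S) v = outdeg D v" for v
      using outdeg_flip[OF assms(2) SD(1) fD, of v] S unfolding eulerian_sub_def by simp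
    moreover have "D - T \<subseteq> flip D S" using SD unfolding flip_def by auto
    ultimately show "flip D S \<in> CL E D T" unfolding CL_def using flip_ori[OF assms(2) SD(1)] by auto
  next
    fix Q assume Q: "Q \<in> CL E D T"
    hence oQ: "orientation E Q" and oo: "\<forall>v. outdeg Q v = outdeg D v" and sub: "D - T \<subseteq> Q"
      unfolding CL_def by auto
    have fQ: "finite Q" using finite_ori assms oQ by blast
    show "flip D (D - Q) = Q" using flip_inv[OF assms(2) oQ] .
    have "indeg (D - Q) v = outdeg (D - Q) v" for v
      using outdeg_diff_split[OF assms(2) oQ fD fQ, of v] oo by simp
    moreover have "D - Q \<subseteq> T" using sub by auto
    ultimately show "D - Q \<in> {S. eulerian_sub T S}" unfolding eulerian_sub_def by auto
  qed simp
  moreover have "(\<Sum>S\<in>{S. eulerian_sub T S}. (-1::real) ^ card (flip D S - R)) =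
      (\<Sum>S\<in>{S. eulerian_sub T S}. (-1) ^ card (D - R) * (-1::real) ^ card S)"
  proof (rule sum.cong)
    fix S assume "S \<in> {S. eulerian_sub T S}"
    hence "S \<subseteq> D" using assms unfolding eulerian_sub_def by auto
    thus "(-1::real) ^ card (flip D S - R) = (-1) ^ card (D - R) * (-1::real) ^ card S"
      using card_flip_sign[OF assms(2,3) _ fD] by blast
  qed simp
  moreover have "(\<Sum>S\<in>{S. eulerian_sub T S}. (-1) ^ card (D - R) * (-1::real) ^ card S) =
      (-1) ^ card (D - R) * (\<Sum>S\<in>{S. eulerian_sub T S}. (-1::real) ^ card S)"
    by (rule sum_distrib_left[symmetric])
  ultimately show ?thesis using sum_sign_eulerian[OF fT] by simp
qed


lemma dd:
  fixes S :: "real set"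
  assumes fS: "finite S" and cS: "card S = Suc n" and kn: "k \<le> n"
  shows "(\<Sum>s\<in>S. s^k / (\<Prod>c\<in>S-{s}. s - c)) = (if k = n then 1 else 0)"
proof -
  define L where "L s = (\<Prod>c\<in>S-{s}. [:-c, 1:])" for s
  define q where "q = (\<Sum>s\<in>S. smult (s^k / (\<Prod>c\<in>S-{s}. s - c)) (L s))"
  have poly_L: "poly (L s) x = (\<Prod>c\<in>S-{s}. x - c)" for s x
    by (simp add: L_def poly_prod)
  have degL: "degree (L s) = n" if "s \<in> S" for s
  proof -
    have "degree (L s) = (\<Sum>c\<in>S-{s}. degree [:-c, 1::real:])"
      unfolding L_def by (rule degree_prod_eq_sum_degree) auto
    also have "\<dots> = card (S - {s})" by simp
    also have "\<dots> = n" using cS that fS by simp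
    finally show ?thesis .
  qed
  have lcL: "lead_coeff (L s) = 1" for s
    unfolding L_def lead_coeff_prod by simp
  have coeffL: "coeff (L s) n = 1" if "s \<in> S" for s
    using lcL[of s] degL[OF that] by simp
  have degq: "degree q \<le> n"
    unfolding q_def
    by (rule degree_sum_le) (use fS degL order_trans[OF degree_smult_le] in auto)
  have polyq: "poly q x = x^k" if "x \<in> S" for x
  proof -
    have "poly q x = (\<Sum>s\<in>S. (s^k / (\<Prod>c\<in>S-{s}. s - c)) * (\<Prod>c\<in>S-{s}. x - c))"
      unfolding q_def by (simp add: poly_sum poly_L)
    also have "\<dots> = (x^k / (\<Prod>c\<in>S-{x}. x - c)) * (\<Prod>c\<in>S-{x}. x - c) +
        (\<Sum>s\<in>S-{x}. (s^k / (\<Prod>c\<in>S-{s}. s - c)) * (\<Prod>c\<in>S-{s}. x - c))"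
      by (rule sum.remove[OF fS that])
    also have "(\<Sum>s\<in>S-{x}. (s^k / (\<Prod>c\<in>S-{s}. s - c)) * (\<Prod>c\<in>S-{s}. x - c)) = 0"
    proof (rule sum.neutral, intro ballI)
      fix s assume "s \<in> S - {x}"
      hence "x \<in> S - {s}" using that by auto
      hence "(\<Prod>c\<in>S-{s}. x - c) = 0" using fS by (intro prod_zero) auto
      thus "(s^k / (\<Prod>c\<in>S-{s}. s - c)) * (\<Prod>c\<in>S-{s}. x - c) = 0" by simp
    qed
    finally have "poly q x = (x^k / (\<Prod>c\<in>S-{x}. x - c)) * (\<Prod>c\<in>S-{x}. x - c)" by simp
    moreover have "(\<Prod>c\<in>S-{x}. x - c) \<noteq> 0" using fS by (subst prod_zero_iff) auto
    ultimately show ?thesis by simp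
  qed
  have "monom 1 k = q"
  proof (rule poly_eqI_degree[of S])
    show "\<And>x. x \<in> S \<Longrightarrow> poly (monom 1 k) x = poly q x" using polyq by (simp add: poly_monom)
    show "degree (monom (1::real) k) < card S" using cS kn by (simp add: degree_monom_eq)
    show "degree q < card S" using degq cS by simp
  qed
  hence "coeff (monom 1 k) n = coeff q n" by simp
  moreover have "coeff q n = (\<Sum>s\<in>S. s^k / (\<Prod>c\<in>S-{s}. s - c))"
    unfolding q_def by (simp add: coeff_sum coeffL)
  moreover have "coeff (monom (1::real) k) n = (if k = n then 1 else 0)" by (simp add: coeff_monom)
  ultimately show ?thesis by simp
qed

definition gg :: "nat \<Rightarrow> nat \<Rightarrow> real" where
  "gg n s = (\<Prod>c\<in>{0..n}-{s}. real s - real c)"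

lemma dd_nat:
  assumes "k \<le> n"
  shows "(\<Sum>s\<in>{0..n}. real s ^ k / gg n s) = (if k = n then 1 else 0)"
proof -
  have "(\<Sum>s\<in>{0..n}. real s ^ k / gg n s) = (\<Sum>x\<in>real ` {0..n}. x^k / (\<Prod>c\<in>real ` {0..n}-{x}. x - c))"
  proof (subst sum.reindex)
    show "inj_on real {0..n}" by (auto simp: inj_on_def)
    show "(\<Sum>s\<in>{0..n}. real s ^ k / gg n s) = (\<Sum>x\<in>{0..n}. ((\<lambda>x. x ^ k / (\<Prod>c\<in>real ` {0..n} - {x}. x - c)) \<circ> real) x)"
    proof (rule sum.cong[OF refl])
      fix s assume "s \<in> {0..n}"
      have "real ` {0..n} - {real s} = real ` ({0..n} - {s})" by auto
      hence "(\<Prod>c\<in>real ` {0..n} - {real s}. real s - c) = (\<Prod>c\<in>{0..n} - {s}. real s - real c)"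
        by (simp add: prod.reindex inj_on_def)
      thus "real s ^ k / gg n s = ((\<lambda>x. x ^ k / (\<Prod>c\<in>real ` {0..n} - {x}. x - c)) \<circ> real) s"
        by (simp add: gg_def)
    qed
  qed
  also have "\<dots> = (if k = n then 1 else 0)"
    by (rule dd) (use assms in \<open>auto simp: card_image inj_on_def\<close>)
  finally show ?thesis .
qed


lemma prod_tail:
  fixes x :: "'v \<Rightarrow> real"
  assumes "finite Q" "fst ` Q \<subseteq> VK" "finite VK"
  shows "(\<Prod>p\<in>Q. x (fst p)) = (\<Prod>v\<in>VK. x v ^ outdeg Q v)"
proof -
  have QS: "Q = (SIGMA v:VK. {w. (v,w) \<in> Q})" using assms(2) by force
  have "(\<Prod>v\<in>VK. x v ^ outdeg Q v) = (\<Prod>v\<in>VK. \<Prod>w\<in>{w. (v,w) \<in> Q}. x v)"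
    unfolding outdeg_def by simp
  also have "\<dots> = (\<Prod>(v,w)\<in>(SIGMA v:VK. {w. (v,w) \<in> Q}). x v)"
    by (rule prod.Sigma) (use assms finite_out in auto)
  also have "\<dots> = (\<Prod>p\<in>Q. x (fst p))" using QS by (simp add: case_prod_beta)
  finally show ?thesis by simp
qed

lemma card_sum_outdeg:
  assumes "finite Q" "fst ` Q \<subseteq> VK" "finite VK"
  shows "card Q = (\<Sum>v\<in>VK. outdeg Q v)"
proof -
  have QS: "Q = (SIGMA v:VK. {w. (v,w) \<in> Q})" using assms(2) by force
  show ?thesis unfolding outdeg_def by (subst QS, subst card_SigmaI) (use assms finite_out in auto)
qed

lemma card_ori:
  assumes "wfE E" "orientation E Q"
  shows "card Q = card E"
proof -
  have "inj_on (\<lambda>(u,v). {u,v}) Q"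
  proof (rule inj_onI, clarify)
    fix a b c d assume ab: "(a,b) \<in> Q" and cd: "(c,d) \<in> Q" and eq: "{a,b} = {c,d}"
    from eq have "(a = c \<and> b = d) \<or> (a = d \<and> b = c)" by (metis doubleton_eq_iff)
    thus "a = c \<and> b = d" using ori_asym[OF assms(2)] ab cd by blast
  qed
  moreover have "(\<lambda>(u,v). {u,v}) ` Q = E"
  proof
    show "(\<lambda>(u,v). {u,v}) ` Q \<subseteq> E" using ori_edge[OF assms(2)] by auto
    show "E \<subseteq> (\<lambda>(u,v). {u,v}) ` Q"
    proof
      fix e assume "e \<in> E"
      then obtain u v where e: "e = {u,v}" using assms(1) unfolding wfE_def by blast
      hence "(u,v) \<in> Q \<or> (v,u) \<in> Q" using ori_cover[OF assms(2)] \<open>e \<in> E\<close> by blast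
      thus "e \<in> (\<lambda>(u,v). {u,v}) ` Q" using e by (auto simp: insert_commute intro: image_eqI)
    qed
  qed
  ultimately show ?thesis using card_image by fastforce
qed

lemma ori_tails:
  assumes "orientation E Q" "\<forall>e\<in>E. e \<subseteq> VK"
  shows "fst ` Q \<subseteq> VK"
  using assms ori_edge[OF assms(1)] by fastforce

lemma expand_prod:
  fixes x :: "'v \<Rightarrow> real"
  assumes wf: "wfE E" and oR: "orientation E R" and fV: "finite VK" and sub: "\<forall>e\<in>E. e \<subseteq> VK"
  shows "(\<Prod>(a,b)\<in>R. x a - x b) =
    (\<Sum>Q\<in>{Q. orientation E Q}. (-1)^card (Q - R) * (\<Prod>v\<in>VK. x v ^ outdeg Q v))"
proof -
  have fR: "finite R" using finite_ori wf oR by blast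
  have "(\<Prod>(a,b)\<in>R. x a - x b) = (\<Prod>p\<in>R. x (fst p) - x (snd p))" by (simp add: case_prod_beta)
  also have "\<dots> = (\<Sum>X\<in>Pow R. (-1) ^ card X * (\<Prod>p\<in>X. x (snd p)) * (\<Prod>p\<in>R-X. x (fst p)))"
    by (rule prod_diff_conv_sum[OF fR])
  also have "\<dots> = (\<Sum>Q\<in>{Q. orientation E Q}. (-1)^card (Q - R) * (\<Prod>v\<in>VK. x v ^ outdeg Q v))"
  proof (rule sum.reindex_bij_witness[where i="\<lambda>Q. R - Q" and j="flip R"])
    fix X assume X: "X \<in> Pow R"
    hence XR: "X \<subseteq> R" by auto
    show "R - flip R X = X" using flip_back[OF oR XR] .
    show "flip R X \<in> {Q. orientation E Q}" using flip_ori[OF oR XR] by simp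
    have oQ: "orientation E (flip R X)" using flip_ori[OF oR XR] .
    have fX: "finite X" using fR XR finite_subset by blast
    have disj: "X\<inverse> \<inter> (R - X) = {}" using ori_asym[OF oR] XR by auto
    have QR: "flip R X - R = X\<inverse>" using ori_asym[OF oR] XR unfolding flip_def by auto
    have "(\<Prod>p\<in>X. x (snd p)) = (\<Prod>p\<in>X\<inverse>. x (fst p))"
    proof -
      have e: "X\<inverse> = (\<lambda>p. (snd p, fst p)) ` X" by force
      have "inj_on (\<lambda>p. (snd p, fst p)) X" by (auto simp: inj_on_def)
      hence "(\<Prod>p\<in>(\<lambda>p. (snd p, fst p)) ` X. x (fst p)) = (\<Prod>p\<in>X. x (snd p))"
        by (simp add: prod.reindex)
      thus ?thesis using e by simp
    qed
    hence "(\<Prod>p\<in>X. x (snd p)) * (\<Prod>p\<in>R-X. x (fst p)) = (\<Prod>p\<in>flip R X. x (fst p))"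
      unfolding flip_def using prod.union_disjoint[of "X\<inverse>" "R - X" "\<lambda>p. x (fst p)"] fX fR disj
      by (simp add: Un_commute)
    also have "\<dots> = (\<Prod>v\<in>VK. x v ^ outdeg (flip R X) v)"
      by (rule prod_tail) (use finite_ori[OF wf oQ] ori_tails[OF oQ sub] fV in auto)
    finally show "(-1) ^ card (flip R X - R) * (\<Prod>v\<in>VK. x v ^ outdeg (flip R X) v) =
        (-1) ^ card X * (\<Prod>p\<in>X. x (snd p)) * (\<Prod>p\<in>R - X. x (fst p))"
      by (simp add: QR card_converse)
  next
    fix Q assume "Q \<in> {Q. orientation E Q}"
    hence oQ: "orientation E Q" by simp
    show "flip R (R - Q) = Q" using flip_inv[OF oR oQ] .
    show "R - Q \<in> Pow R" by auto
  qed
  finally show ?thesis .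
qed


lemma finite_oris: "wfE E \<Longrightarrow> finite {Q. orientation E Q}"
  by (rule finite_subset[of _ "Pow (arcsE E)"]) (auto dest: ori_sub intro: finite_arcsE)

lemma coeff_factor:
  assumes wf: "wfE E" and oQ: "orientation E Q" and fV: "finite VK" and sub: "\<forall>e\<in>E. e \<subseteq> VK"
    and sumd: "(\<Sum>v\<in>VK. d v) = card E"
  shows "(\<Prod>v\<in>VK. \<Sum>s\<in>{0..d v}. real s ^ outdeg Q v / gg (d v) s) =
         (if (\<forall>v\<in>VK. outdeg Q v = d v) then 1 else 0)"
proof (cases "\<forall>v\<in>VK. outdeg Q v = d v")
  case True
  thus ?thesis by (simp add: dd_nat)
next
  case False
  have "(\<Sum>v\<in>VK. outdeg Q v) = card E"
    using card_sum_outdeg[OF finite_ori[OF wf oQ] ori_tails[OF oQ sub] fV] card_ori[OF wf oQ] by simp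
  have "\<exists>v\<in>VK. outdeg Q v < d v"
  proof (rule ccontr)
    assume "\<not> ?thesis"
    hence ge: "\<forall>v\<in>VK. d v \<le> outdeg Q v" by auto
    from False obtain v where "v \<in> VK" "outdeg Q v \<noteq> d v" by auto
    hence "\<exists>v\<in>VK. d v < outdeg Q v" using ge by force
    hence "(\<Sum>v\<in>VK. d v) < (\<Sum>v\<in>VK. outdeg Q v)" using sum_strict_mono_ex1[OF fV ge] by blast
    thus False using sumd \<open>(\<Sum>v\<in>VK. outdeg Q v) = card E\<close> by simp
  qed
  then obtain v where v: "v \<in> VK" "outdeg Q v < d v" by blast
  have "(\<Sum>s\<in>{0..d v}. real s ^ outdeg Q v / gg (d v) s) = 0" using dd_nat[of "outdeg Q v" "d v"] v by simp
  hence "(\<Prod>v\<in>VK. \<Sum>s\<in>{0..d v}. real s ^ outdeg Q v / gg (d v) s) = 0"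
    using v fV by (intro prod_zero) auto
  thus ?thesis using False by simp
qed

lemma coeff_formula:
  assumes wf: "wfE E" and oR: "orientation E R" and fV: "finite VK" and sub: "\<forall>e\<in>E. e \<subseteq> VK"
    and sumd: "(\<Sum>v\<in>VK. d v) = card E"
  shows "(\<Sum>z\<in>PiE VK (\<lambda>v. {0..d v}). (\<Prod>(a,b)\<in>R. real (z a) - real (z b)) / (\<Prod>v\<in>VK. gg (d v) (z v)))
       = (\<Sum>Q\<in>{Q. orientation E Q \<and> (\<forall>v\<in>VK. outdeg Q v = d v)}. (-1::real)^card (Q - R))"
proof -
  let ?O = "{Q. orientation E Q}"
  let ?P = "PiE VK (\<lambda>v. {0..d v})"
  have fO: "finite ?O" using finite_oris[OF wf] .
  have fP: "finite ?P" using fV by (simp add: finite_PiE)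
  have "(\<Sum>z\<in>?P. (\<Prod>(a,b)\<in>R. real (z a) - real (z b)) / (\<Prod>v\<in>VK. gg (d v) (z v)))
      = (\<Sum>z\<in>?P. \<Sum>Q\<in>?O. (-1)^card (Q - R) * (\<Prod>v\<in>VK. real (z v) ^ outdeg Q v / gg (d v) (z v)))"
  proof (rule sum.cong[OF refl])
    fix z
    have "(\<Prod>(a,b)\<in>R. real (z a) - real (z b)) =
       (\<Sum>Q\<in>?O. (-1)^card (Q - R) * (\<Prod>v\<in>VK. real (z v) ^ outdeg Q v))"
      using expand_prod[OF wf oR fV sub, of "\<lambda>v. real (z v)"] by simp
    thus "(\<Prod>(a,b)\<in>R. real (z a) - real (z b)) / (\<Prod>v\<in>VK. gg (d v) (z v)) =
       (\<Sum>Q\<in>?O. (-1)^card (Q - R) * (\<Prod>v\<in>VK. real (z v) ^ outdeg Q v / gg (d v) (z v)))"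
      by (simp add: sum_divide_distrib prod_dividef)
  qed
  also have "\<dots> = (\<Sum>Q\<in>?O. (-1)^card (Q - R) * (\<Sum>z\<in>?P. \<Prod>v\<in>VK. real (z v) ^ outdeg Q v / gg (d v) (z v)))"
    by (subst sum.swap) (simp add: sum_distrib_left)
  also have "\<dots> = (\<Sum>Q\<in>?O. (-1)^card (Q - R) * (\<Prod>v\<in>VK. \<Sum>s\<in>{0..d v}. real s ^ outdeg Q v / gg (d v) s))"
    by (rule sum.cong[OF refl]) (simp add: prod_sum_PiE[OF fV])
  also have "\<dots> = (\<Sum>Q\<in>?O. (-1)^card (Q - R) * (if (\<forall>v\<in>VK. outdeg Q v = d v) then 1 else 0))"
    by (rule sum.cong[OF refl]) (simp add: coeff_factor[OF wf _ fV sub sumd])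
  also have "\<dots> = (\<Sum>Q\<in>{Q. orientation E Q \<and> (\<forall>v\<in>VK. outdeg Q v = d v)}. (-1::real)^card (Q - R))"
  proof -
    have "{Q. orientation E Q \<and> (\<forall>v\<in>VK. outdeg Q v = d v)} = ?O \<inter> {Q. \<forall>v\<in>VK. outdeg Q v = d v}" by auto
    thus ?thesis using sum.inter_restrict[OF fO, of "\<lambda>Q. (-1::real)^card (Q - R)"]
      by (simp add: if_distrib cong: if_cong)
  qed
  finally show ?thesis .
qed


lemma outdeg_outside:
  assumes "orientation E Q" "\<forall>e\<in>E. e \<subseteq> VK" "v \<notin> VK"
  shows "outdeg Q v = 0"
proof -
  have "{w. (v,w) \<in> Q} = {}" using ori_edge[OF assms(1)] assms(2,3) by blast
  thus ?thesis unfolding outdeg_def by simp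
qed

lemma extract_ori:
  assumes wf: "wfE EK" and oR: "orientation EK R" and E1: "E1 \<subseteq> EK" and fV: "finite VK"
    and sub: "\<forall>e\<in>EK. e \<subseteq> VK"
    and nz: "(\<Sum>Q\<in>{Q. orientation EK Q \<and> (\<forall>v\<in>VK. outdeg Q v = d v)}. (-1::real)^card (Q - R)) \<noteq> 0"
  shows "\<exists>T. orientation E1 T \<and> (\<forall>v\<in>VK. outdeg T v \<le> d v) \<and>
     card {S. eulerian_sub T S \<and> even (card S)} \<noteq> card {S. eulerian_sub T S \<and> odd (card S)}"
proof (rule ccontr)
  assume H: "\<not> ?thesis"
  let ?A = "{Q. orientation EK Q \<and> (\<forall>v\<in>VK. outdeg Q v = d v)}"
  let ?X = "arcsE E1"
  have fA: "finite ?A" by (rule finite_subset[OF _ finite_oris[OF wf]]) auto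
  have "(\<Sum>Q\<in>?A. (-1::real)^card (Q - R)) =
      (\<Sum>K0\<in>(\<lambda>Q. Q - ?X) ` ?A. \<Sum>Q\<in>{Q\<in>?A. Q - ?X = K0}. (-1::real)^card (Q - R))"
    by (rule sum.image_gen[OF fA])
  also have "\<dots> = 0"
  proof (rule sum.neutral, intro ballI)
    fix K0 assume "K0 \<in> (\<lambda>Q. Q - ?X) ` ?A"
    then obtain D where DA: "D \<in> ?A" and K0: "K0 = D - ?X" by blast
    have oD: "orientation EK D" and dD: "\<forall>v\<in>VK. outdeg D v = d v" using DA by auto
    have fD: "finite D" using finite_ori[OF wf oD] .
    let ?T = "D \<inter> ?X"
    have oT: "orientation E1 ?T"
      unfolding orientation_def
    proof (rule conjI; intro allI impI)
      fix u v assume "(u,v) \<in> ?T"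
      thus "{u,v} \<in> E1 \<and> (v,u) \<notin> ?T" using ori_asym[OF oD] unfolding arcsE_def by auto
    next
      fix u v assume uv: "{u,v} \<in> E1"
      hence "(u,v) \<in> D \<or> (v,u) \<in> D" using ori_cover[OF oD] E1 by blast
      moreover have "{v,u} \<in> E1" using uv by (simp add: insert_commute)
      ultimately show "(u,v) \<in> ?T \<or> (v,u) \<in> ?T" using uv unfolding arcsE_def by auto
    qed
    have degT: "\<forall>v\<in>VK. outdeg ?T v \<le> d v"
    proof
      fix v assume "v \<in> VK"
      have "outdeg ?T v \<le> outdeg D v" unfolding outdeg_def
        by (rule card_mono[OF finite_out[OF fD]]) auto
      thus "outdeg ?T v \<le> d v" using dD \<open>v \<in> VK\<close> by simp
    qed
    have eqc: "card {S. eulerian_sub ?T S \<and> even (card S)} = card {S. eulerian_sub ?T S \<and> odd (card S)}"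
      using H oT degT by blast
    have seteq: "{Q\<in>?A. Q - ?X = K0} = CL EK D ?T"
    proof (rule set_eqI, rule iffI)
      fix Q assume "Q \<in> {Q\<in>?A. Q - ?X = K0}"
      hence oQ: "orientation EK Q" and dQ: "\<forall>v\<in>VK. outdeg Q v = d v" and QX: "Q - ?X = D - ?X"
        using K0 by auto
      have "outdeg Q v = outdeg D v" for v
        by (cases "v \<in> VK") (use dQ dD outdeg_outside[OF oQ sub] outdeg_outside[OF oD sub] in auto)
      moreover have "D - ?T \<subseteq> Q" using QX by auto
      ultimately show "Q \<in> CL EK D ?T" unfolding CL_def using oQ by auto
    next
      fix Q assume "Q \<in> CL EK D ?T"
      hence oQ: "orientation EK Q" and oo: "\<forall>v. outdeg Q v = outdeg D v" and sQ: "D - ?T \<subseteq> Q"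
        unfolding CL_def by auto
      have "Q - ?X = D - ?X"
      proof
        show "D - ?X \<subseteq> Q - ?X" using sQ by auto
        show "Q - ?X \<subseteq> D - ?X"
        proof
          fix p assume p: "p \<in> Q - ?X"
          obtain u v where puv: "p = (u,v)" by (cases p)
          have e: "{u,v} \<in> EK" using ori_edge[OF oQ] p puv by auto
          have nX: "{u,v} \<notin> E1" using p puv unfolding arcsE_def by auto
          hence nX': "{v,u} \<notin> E1" by (simp add: insert_commute)
          have "(v,u) \<notin> Q" using ori_asym[OF oQ] p puv by auto
          hence "(v,u) \<notin> D" using sQ nX' unfolding arcsE_def by auto
          hence "(u,v) \<in> D" using ori_cover[OF oD e] by auto
          thus "p \<in> D - ?X" using puv nX unfolding arcsE_def by auto
        qed
      qed
      thus "Q \<in> {Q\<in>?A. Q - ?X = K0}" using oQ oo dD K0 by auto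
    qed
    show "(\<Sum>Q\<in>{Q\<in>?A. Q - ?X = K0}. (-1::real)^card (Q - R)) = 0"
      unfolding seteq using classA[OF wf oD oR, of ?T] eqc by simp
  qed
  finally show False using nz by simp
qed


definition VK :: "nat \<Rightarrow> (nat \<times> nat) set" where "VK t = {0..<t} \<times> {0..<2}"
definition RK :: "nat \<Rightarrow> ((nat \<times> nat) \<times> (nat \<times> nat)) set" where
  "RK t = {(p,q). p \<in> VK t \<and> q \<in> VK t \<and> fst p < fst q}"
definition EK :: "nat \<Rightarrow> (nat \<times> nat) set set" where
  "EK t = {{p,q} | p q. p \<in> VK t \<and> q \<in> VK t \<and> fst p \<noteq> fst q}"

lemma EK_I: "p \<in> VK t \<Longrightarrow> q \<in> VK t \<Longrightarrow> fst p \<noteq> fst q \<Longrightarrow> {p,q} \<in> EK t"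
  unfolding EK_def by blast

lemma finite_VK: "finite (VK t)" unfolding VK_def by simp

lemma card_VK: "card (VK t) = 2 * t" unfolding VK_def by (simp add: card_cartesian_product)

lemma wf_EK: "wfE (EK t)"
proof -
  have "EK t = (\<lambda>(p,q). {p,q}) ` {(p,q). p \<in> VK t \<and> q \<in> VK t \<and> fst p \<noteq> fst q}"
  proof
    show "EK t \<subseteq> (\<lambda>(p,q). {p,q}) ` {(p,q). p \<in> VK t \<and> q \<in> VK t \<and> fst p \<noteq> fst q}"
      unfolding EK_def by force
    show "(\<lambda>(p,q). {p,q}) ` {(p,q). p \<in> VK t \<and> q \<in> VK t \<and> fst p \<noteq> fst q} \<subseteq> EK t"
      using EK_I by fastforce
  qed
  moreover have "finite {(p,q). p \<in> VK t \<and> q \<in> VK t \<and> fst p \<noteq> fst q}"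
    by (rule finite_subset[of _ "VK t \<times> VK t"]) (auto simp: finite_VK)
  ultimately have "finite (EK t)" by simp
  moreover have "\<forall>e\<in>EK t. \<exists>u v. e = {u,v} \<and> u \<noteq> v" unfolding EK_def by auto
  ultimately show ?thesis unfolding wfE_def by blast
qed

lemma EK_sub: "\<forall>e\<in>EK t. e \<subseteq> VK t" unfolding EK_def by auto

lemma ori_RK: "orientation (EK t) (RK t)"
  unfolding orientation_def
proof (rule conjI; intro allI impI)
  fix u v assume "(u,v) \<in> RK t"
  thus "{u,v} \<in> EK t \<and> (v,u) \<notin> RK t" using EK_I[of u t v] unfolding RK_def by auto
next
  fix u v assume "{u,v} \<in> EK t"
  then obtain p q where pq: "{u,v} = {p,q}" "p \<in> VK t" "q \<in> VK t" "fst p \<noteq> fst q" unfolding EK_def by blast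
  hence "(u = p \<and> v = q) \<or> (u = q \<and> v = p)" by (metis doubleton_eq_iff)
  thus "(u,v) \<in> RK t \<or> (v,u) \<in> RK t" using pq unfolding RK_def by (cases "fst p < fst q") auto
qed

lemma finite_RK: "finite (RK t)" using finite_ori[OF wf_EK ori_RK] .

lemma card_RK: "card (RK t) = 2 * t * (t - 1)"
proof -
  have tails: "fst ` RK t \<subseteq> VK t" unfolding RK_def by auto
  have heads: "fst ` (RK t)\<inverse> \<subseteq> VK t" unfolding RK_def by auto
  have s1: "card (RK t) = (\<Sum>v\<in>VK t. outdeg (RK t) v)"
    using card_sum_outdeg[OF finite_RK tails finite_VK] .
  have "card ((RK t)\<inverse>) = (\<Sum>v\<in>VK t. outdeg ((RK t)\<inverse>) v)"
    using card_sum_outdeg[OF _ heads finite_VK] finite_RK by simp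
  hence s2: "card (RK t) = (\<Sum>v\<in>VK t. indeg (RK t) v)"
    by (simp add: card_converse outdeg_def indeg_def)
  have each: "outdeg (RK t) p + indeg (RK t) p = 2 * t - 2" if p: "p \<in> VK t" for p
  proof -
    have "outdeg (RK t) p + indeg (RK t) p = card ({q. (p,q) \<in> RK t} \<union> {q. (q,p) \<in> RK t})"
      unfolding outdeg_def indeg_def
      by (rule card_Un_disjoint[symmetric]) (use finite_out[OF finite_RK] finite_in[OF finite_RK] in \<open>auto simp: RK_def\<close>)
    also have "{q. (p,q) \<in> RK t} \<union> {q. (q,p) \<in> RK t} = VK t - {fst p} \<times> {0..<2}"
      using p unfolding RK_def VK_def by auto
    also have "card \<dots> = 2 * t - 2"
    proof -
      have "{fst p} \<times> {0..<2} \<subseteq> VK t" using p unfolding VK_def by auto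
      moreover have "card ({fst p} \<times> {0..<(2::nat)}) = 2" by (simp add: card_cartesian_product)
      ultimately show ?thesis using card_Diff_subset[of "{fst p} \<times> {0..<2}" "VK t"] card_VK[of t] by simp
    qed
    finally show ?thesis .
  qed
  have "2 * card (RK t) = (\<Sum>v\<in>VK t. outdeg (RK t) v + indeg (RK t) v)"
    using s1 s2 by (simp add: sum.distrib)
  also have "\<dots> = (\<Sum>v\<in>VK t. 2 * t - 2)" using each by simp
  also have "\<dots> = 2 * t * (2 * t - 2)" using card_VK[of t] by simp
  finally have "2 * card (RK t) = 2 * t * (2 * t - 2)" .
  thus ?thesis by (simp add: algebra_simps)
qed

lemma card_EK: "card (EK t) = 2 * t * (t - 1)"
  using card_ori[OF wf_EK ori_RK] card_RK by simp

lemma sum_d_K: "(\<Sum>v\<in>VK t. t - 1) = card (EK t)"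
  using card_EK card_VK by simp


lemma prod_square_split:
  fixes g :: "'a \<Rightarrow> real"
  assumes "finite A0" "inj_on m A0" "A0 \<inter> m ` A0 = {}" "\<forall>x\<in>A0. g (m x) = g x"
  shows "prod g (A0 \<union> m ` A0) = (prod g A0)^2"
proof -
  have "prod g (m ` A0) = prod (g \<circ> m) A0" using prod.reindex[OF assms(2)] .
  also have "\<dots> = prod g A0" using assms(4) by (intro prod.cong) auto
  finally have "prod g (m ` A0) = prod g A0" .
  moreover have "prod g (A0 \<union> m ` A0) = prod g A0 * prod g (m ` A0)"
    by (rule prod.union_disjoint) (use assms in auto)
  ultimately show ?thesis by (simp add: power2_eq_square)
qed

lemma mono_parts:
  assumes z: "\<forall>v\<in>VK t. z v \<le> t - 1" and t: "1 \<le> t"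
    and proper: "\<forall>(p,q)\<in>RK t. z p \<noteq> z q"
  shows "\<forall>i<t. z (i,0) = z (i,1)"
proof (rule ccontr)
  assume "\<not> ?thesis"
  then obtain i0 where i0: "i0 < t" "z (i0,0) \<noteq> z (i0,1)" by auto
  define C where "C i = {z (i,0), z (i,1)}" for i
  have disj: "\<forall>i\<in>{..<t}. \<forall>j\<in>{..<t}. i \<noteq> j \<longrightarrow> C i \<inter> C j = {}"
  proof (intro ballI impI)
    fix i j assume ij: "i \<in> {..<t}" "j \<in> {..<t}" "i \<noteq> j"
    have "z (i,a) \<noteq> z (j,b)" if "a < 2" "b < 2" for a b
    proof (cases "i < j")
      case True
      hence "((i,a),(j,b)) \<in> RK t" using ij that unfolding RK_def VK_def by auto
      thus ?thesis using proper by auto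
    next
      case False
      hence "((j,b),(i,a)) \<in> RK t" using ij that unfolding RK_def VK_def by auto
      thus ?thesis using proper by fastforce
    qed
    thus "C i \<inter> C j = {}" unfolding C_def by auto
  qed
  have "card (\<Union>(C ` {..<t})) = (\<Sum>i\<in>{..<t}. card (C i))"
    by (rule card_UN_disjoint) (use disj in \<open>auto simp: C_def\<close>)
  moreover have "card (\<Union>(C ` {..<t})) \<le> card {0..t-1}"
  proof (rule card_mono)
    show "\<Union>(C ` {..<t}) \<subseteq> {0..t-1}" using z unfolding C_def VK_def by auto
  qed simp
  moreover have "(\<Sum>i\<in>{..<t}. (1::nat)) < (\<Sum>i\<in>{..<t}. card (C i))"
  proof (rule sum_strict_mono_ex1)
    show "\<forall>x\<in>{..<t}. 1 \<le> card (C x)" unfolding C_def by (auto simp: card_insert_if)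
    show "\<exists>a\<in>{..<t}. 1 < card (C a)" using i0 unfolding C_def by (intro bexI[of _ i0]) auto
  qed simp
  ultimately show False using t by simp
qed

definition FK :: "nat \<Rightarrow> (nat \<times> nat \<Rightarrow> nat) \<Rightarrow> real" where
  "FK t z = (\<Prod>(a,b)\<in>RK t. real (z a) - real (z b)) / (\<Prod>v\<in>VK t. gg (t - 1) (z v))"

lemma FK_nonneg:
  assumes t: "1 \<le> t" and zP: "z \<in> PiE (VK t) (\<lambda>_. {0..t-1})"
  shows "0 \<le> FK t z"
proof (cases "\<forall>(p,q)\<in>RK t. z p \<noteq> z q")
  case False
  then obtain p q where "(p,q) \<in> RK t" "z p = z q" by auto
  hence "(\<Prod>(a,b)\<in>RK t. real (z a) - real (z b)) = 0"
    using finite_RK by (intro prod_zero) (auto intro!: bexI[of _ "(p,q)"])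
  thus ?thesis unfolding FK_def by simp
next
  case True
  have zb: "\<forall>v\<in>VK t. z v \<le> t - 1" using zP by auto
  have mono: "\<forall>i<t. z (i,0) = z (i,1)" using mono_parts[OF zb t True] .
  let ?R0 = "{r\<in>RK t. snd (fst r) = 0}"
  let ?m = "\<lambda>r::(nat\<times>nat)\<times>(nat\<times>nat). ((fst (fst r), 1::nat), snd r)"
  have R0f: "finite ?R0" using finite_RK by simp
  have Rsplit: "RK t = ?R0 \<union> ?m ` ?R0"
  proof
    show "RK t \<subseteq> ?R0 \<union> ?m ` ?R0"
    proof
      fix r assume r: "r \<in> RK t"
      obtain i a q where rr: "r = ((i,a),q)" by (cases r) auto
      have "a < 2" using r rr unfolding RK_def VK_def by auto
      hence "a = 0 \<or> a = 1" by auto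
      thus "r \<in> ?R0 \<union> ?m ` ?R0"
      proof
        assume "a = 0" thus ?thesis using r rr by auto
      next
        assume a1: "a = 1"
        have "((i,0),q) \<in> RK t" using r rr unfolding RK_def VK_def by auto
        hence "((i,0),q) \<in> ?R0" by auto
        thus ?thesis using rr a1 by (auto intro!: image_eqI[of _ _ "((i,0),q)"])
      qed
    qed
    show "?R0 \<union> ?m ` ?R0 \<subseteq> RK t" unfolding RK_def VK_def by auto
  qed
  have num: "(\<Prod>(a,b)\<in>RK t. real (z a) - real (z b)) = (\<Prod>r\<in>?R0. real (z (fst r)) - real (z (snd r)))^2"
  proof -
    have "(\<Prod>(a,b)\<in>RK t. real (z a) - real (z b)) = (\<Prod>r\<in>RK t. real (z (fst r)) - real (z (snd r)))"
      by (simp add: case_prod_beta)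
    also have "\<dots> = (\<Prod>r\<in>?R0 \<union> ?m ` ?R0. real (z (fst r)) - real (z (snd r)))" by (subst Rsplit[symmetric]) (rule refl)
    also have "\<dots> = (\<Prod>r\<in>?R0. real (z (fst r)) - real (z (snd r)))^2"
    proof (rule prod_square_split[OF R0f])
      show "inj_on ?m ?R0" by (auto simp: inj_on_def)
      show "?R0 \<inter> ?m ` ?R0 = {}" by auto
      show "\<forall>x\<in>?R0. real (z (fst (?m x))) - real (z (snd (?m x))) = real (z (fst x)) - real (z (snd x))"
      proof
        fix x assume x: "x \<in> ?R0"
        obtain i a q where xx0: "x = ((i,a),q)" by (cases x) auto
        hence xx: "x = ((i,0),q)" using x by auto
        have "i < t" using x xx unfolding RK_def VK_def by auto
        thus "real (z (fst (?m x))) - real (z (snd (?m x))) = real (z (fst x)) - real (z (snd x))"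
          using mono xx by simp
      qed
    qed
    finally show ?thesis .
  qed
  let ?V0 = "{v\<in>VK t. snd v = 0}"
  let ?n = "\<lambda>v::nat\<times>nat. (fst v, 1::nat)"
  have Vsplit: "VK t = ?V0 \<union> ?n ` ?V0"
  proof
    show "VK t \<subseteq> ?V0 \<union> ?n ` ?V0"
    proof
      fix v assume v: "v \<in> VK t"
      obtain i a where vv: "v = (i,a)" by (cases v) auto
      have "a = 0 \<or> a = 1" using v vv unfolding VK_def by auto
      thus "v \<in> ?V0 \<union> ?n ` ?V0"
      proof
        assume "a = 0" thus ?thesis using v vv by auto
      next
        assume a1: "a = 1"
        have "(i,0) \<in> ?V0" using v vv unfolding VK_def by auto
        thus ?thesis using vv a1 by (auto intro!: image_eqI[of _ _ "(i,0)"])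
      qed
    qed
    show "?V0 \<union> ?n ` ?V0 \<subseteq> VK t" unfolding VK_def by auto
  qed
  have den: "(\<Prod>v\<in>VK t. gg (t - 1) (z v)) = (\<Prod>v\<in>?V0. gg (t - 1) (z v))^2"
  proof -
    have "(\<Prod>v\<in>VK t. gg (t - 1) (z v)) = (\<Prod>v\<in>?V0 \<union> ?n ` ?V0. gg (t - 1) (z v))" by (subst Vsplit[symmetric]) (rule refl)
    also have "\<dots> = (\<Prod>v\<in>?V0. gg (t - 1) (z v))^2"
    proof (rule prod_square_split)
      show "finite ?V0" using finite_VK by simp
      show "inj_on ?n ?V0" by (auto simp: inj_on_def)
      show "?V0 \<inter> ?n ` ?V0 = {}" by auto
      show "\<forall>x\<in>?V0. gg (t - 1) (z (?n x)) = gg (t - 1) (z x)"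
      proof
        fix x assume x: "x \<in> ?V0"
        obtain i a where xx0: "x = (i,a)" by (cases x) auto
        hence xx: "x = (i,0)" using x by auto
        have "i < t" using x xx unfolding VK_def by auto
        thus "gg (t - 1) (z (?n x)) = gg (t - 1) (z x)" using mono xx by simp
      qed
    qed
    finally show ?thesis .
  qed
  show ?thesis unfolding FK_def num den by simp
qed

lemma gg_nz: "s \<le> n \<Longrightarrow> gg n s \<noteq> 0"
  unfolding gg_def by (subst prod_zero_iff) auto

lemma FK_pos:
  assumes t: "1 \<le> t"
  shows "0 < (\<Sum>z\<in>PiE (VK t) (\<lambda>_. {0..t-1}). FK t z)"
proof (rule sum_pos2)
  let ?z0 = "\<lambda>v\<in>VK t. fst v"
  show "finite (PiE (VK t) (\<lambda>_. {0..t-1}))" using finite_VK by (simp add: finite_PiE)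
  show z0: "?z0 \<in> PiE (VK t) (\<lambda>_. {0..t-1})" unfolding VK_def by auto
  show "\<And>z. z \<in> PiE (VK t) (\<lambda>_. {0..t-1}) \<Longrightarrow> 0 \<le> FK t z" using FK_nonneg[OF t] by blast
  have n1: "(\<Prod>(a,b)\<in>RK t. real (?z0 a) - real (?z0 b)) \<noteq> 0"
  proof -
    have "\<forall>r\<in>RK t. (case r of (a,b) \<Rightarrow> real (?z0 a) - real (?z0 b)) \<noteq> 0"
      unfolding RK_def by auto
    thus ?thesis using finite_RK by (subst prod_zero_iff) auto
  qed
  have n2: "(\<Prod>v\<in>VK t. gg (t - 1) (?z0 v)) \<noteq> 0"
  proof -
    have "\<forall>v\<in>VK t. gg (t - 1) (?z0 v) \<noteq> 0" using gg_nz unfolding VK_def by auto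
    thus ?thesis using finite_VK by (subst prod_zero_iff) auto
  qed
  have "FK t ?z0 \<noteq> 0" unfolding FK_def using n1 n2 by simp
  thus "0 < FK t ?z0" using FK_nonneg[OF t z0] by simp
qed


lemma nbhd_image_out:
  assumes "S' \<subseteq> V \<times> V" "inj_on \<phi> V" "v \<in> V"
  shows "{w. (\<phi> v, w) \<in> map_prod \<phi> \<phi> ` S'} = \<phi> ` {w. (v,w) \<in> S'}"
proof (rule set_eqI, rule iffI)
  fix w assume "w \<in> {w. (\<phi> v, w) \<in> map_prod \<phi> \<phi> ` S'}"
  hence "(\<phi> v, w) \<in> map_prod \<phi> \<phi> ` S'" by simp
  then obtain p where p: "p \<in> S'" "(\<phi> v, w) = map_prod \<phi> \<phi> p" by (rule imageE) simp
  obtain a b where ab: "p = (a,b)" by (cases p)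
  have eq: "\<phi> a = \<phi> v" "w = \<phi> b" using p(2) ab by auto
  have "a \<in> V" using p(1) ab assms(1) by blast
  hence "a = v" using inj_onD[OF assms(2) eq(1) _ assms(3)] by blast
  thus "w \<in> \<phi> ` {w. (v,w) \<in> S'}" using p(1) ab eq(2) by blast
next
  fix w assume "w \<in> \<phi> ` {w. (v,w) \<in> S'}"
  then obtain b where b: "(v,b) \<in> S'" "w = \<phi> b" by auto
  have "(\<phi> v, w) \<in> map_prod \<phi> \<phi> ` S'" using rev_image_eqI[OF b(1), of "(\<phi> v, w)" "map_prod \<phi> \<phi>"] b(2) by simp
  thus "w \<in> {w. (\<phi> v, w) \<in> map_prod \<phi> \<phi> ` S'}" by simp
qed

lemma nbhd_image_in:
  assumes "S' \<subseteq> V \<times> V" "inj_on \<phi> V" "v \<in> V"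
  shows "{w. (w, \<phi> v) \<in> map_prod \<phi> \<phi> ` S'} = \<phi> ` {w. (w,v) \<in> S'}"
proof (rule set_eqI, rule iffI)
  fix w assume "w \<in> {w. (w, \<phi> v) \<in> map_prod \<phi> \<phi> ` S'}"
  hence "(w, \<phi> v) \<in> map_prod \<phi> \<phi> ` S'" by simp
  then obtain p where p: "p \<in> S'" "(w, \<phi> v) = map_prod \<phi> \<phi> p" by (rule imageE) simp
  obtain a b where ab: "p = (a,b)" by (cases p)
  have eq: "\<phi> b = \<phi> v" "w = \<phi> a" using p(2) ab by auto
  have "b \<in> V" using p(1) ab assms(1) by blast
  hence "b = v" using inj_onD[OF assms(2) eq(1) _ assms(3)] by blast
  thus "w \<in> \<phi> ` {w. (w,v) \<in> S'}" using p(1) ab eq(2) by blast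
next
  fix w assume "w \<in> \<phi> ` {w. (w,v) \<in> S'}"
  then obtain a where a: "(a,v) \<in> S'" "w = \<phi> a" by auto
  have "(w, \<phi> v) \<in> map_prod \<phi> \<phi> ` S'" using rev_image_eqI[OF a(1), of "(w, \<phi> v)" "map_prod \<phi> \<phi>"] a(2) by simp
  thus "w \<in> {w. (w, \<phi> v) \<in> map_prod \<phi> \<phi> ` S'}" by simp
qed

lemma deg_image:
  assumes "S' \<subseteq> V \<times> V" "inj_on \<phi> V" "v \<in> V"
  shows "outdeg (map_prod \<phi> \<phi> ` S') (\<phi> v) = outdeg S' v \<and> indeg (map_prod \<phi> \<phi> ` S') (\<phi> v) = indeg S' v"
proof
  have "inj_on \<phi> {w. (v,w) \<in> S'}" by (rule inj_on_subset[OF assms(2)]) (use assms(1) in blast)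
  thus "outdeg (map_prod \<phi> \<phi> ` S') (\<phi> v) = outdeg S' v"
    unfolding outdeg_def nbhd_image_out[OF assms] by (rule card_image)
next
  have "inj_on \<phi> {w. (w,v) \<in> S'}" by (rule inj_on_subset[OF assms(2)]) (use assms(1) in blast)
  thus "indeg (map_prod \<phi> \<phi> ` S') (\<phi> v) = indeg S' v"
    unfolding indeg_def nbhd_image_in[OF assms] by (rule card_image)
qed


lemma deg_outside:
  assumes "S \<subseteq> W \<times> W" "x \<notin> W"
  shows "outdeg S x = 0 \<and> indeg S x = 0"
proof -
  have "{w. (x,w) \<in> S} = {}" "{w. (w,x) \<in> S} = {}" using assms by auto
  thus ?thesis unfolding outdeg_def indeg_def by simp
qed

lemma inj_map_prod_on: "inj_on \<phi> V \<Longrightarrow> inj_on (map_prod \<phi> \<phi>) (V \<times> V)"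
  by (auto simp: inj_on_def)

lemma euler_count_transfer:
  assumes inj: "inj_on \<phi> V" and T'V: "T' \<subseteq> V \<times> V" and TT: "T = map_prod \<phi> \<phi> ` T'"
  shows "card {S'. eulerian_sub T' S' \<and> P (card S')} = card {S. eulerian_sub T S \<and> P (card S)}"
proof -
  let ?h = "map_prod \<phi> \<phi>"
  have ih: "inj_on ?h (V \<times> V)" using inj_map_prod_on[OF inj] .
  have TW: "T \<subseteq> (\<phi> ` V) \<times> (\<phi> ` V)" using TT T'V by auto
  have img: "(`) ?h ` {S'. eulerian_sub T' S' \<and> P (card S')} = {S. eulerian_sub T S \<and> P (card S)}"
  proof
    show "(`) ?h ` {S'. eulerian_sub T' S' \<and> P (card S')} \<subseteq> {S. eulerian_sub T S \<and> P (card S)}"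
    proof
      fix S assume "S \<in> (`) ?h ` {S'. eulerian_sub T' S' \<and> P (card S')}"
      then obtain S' where S: "S = ?h ` S'" "eulerian_sub T' S'" "P (card S')" by auto
      have S'V: "S' \<subseteq> V \<times> V" using S(2) T'V unfolding eulerian_sub_def by auto
      have "S \<subseteq> T" using S TT unfolding eulerian_sub_def by auto
      moreover have "indeg S x = outdeg S x" for x
      proof (cases "x \<in> \<phi> ` V")
        case True
        then obtain v where v: "v \<in> V" "x = \<phi> v" by auto
        thus ?thesis using deg_image[OF S'V inj v(1)] S(1,2) unfolding eulerian_sub_def by simp
      next
        case False
        have sub: "S \<subseteq> (\<phi> ` V) \<times> (\<phi> ` V)" using S(1) S'V by auto
        from deg_outside[OF sub False] show ?thesis by simp
      qed
      moreover have "card S = card S'" unfolding S(1) by (rule card_image[OF inj_on_subset[OF ih S'V]])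
      ultimately have "eulerian_sub T S" "card S = card S'" unfolding eulerian_sub_def by blast+
      thus "S \<in> {S. eulerian_sub T S \<and> P (card S)}" using S(3) by simp
    qed
    show "{S. eulerian_sub T S \<and> P (card S)} \<subseteq> (`) ?h ` {S'. eulerian_sub T' S' \<and> P (card S')}"
    proof
      fix S assume S: "S \<in> {S. eulerian_sub T S \<and> P (card S)}"
      let ?S' = "{p\<in>T'. ?h p \<in> S}"
      have ST: "S \<subseteq> T" using S unfolding eulerian_sub_def by auto
      have hS: "?h ` ?S' = S"
      proof
        show "?h ` ?S' \<subseteq> S" by auto
        show "S \<subseteq> ?h ` ?S'"
        proof
          fix p assume p: "p \<in> S"
          have "p \<in> ?h ` T'" using ST TT p by auto
          then obtain q where q: "q \<in> T'" "p = ?h q" by (rule imageE) simp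
          thus "p \<in> ?h ` ?S'" using p by (intro rev_image_eqI[of q]) auto
        qed
      qed
      have S'V: "?S' \<subseteq> V \<times> V" using T'V by auto
      have "indeg ?S' v = outdeg ?S' v" for v
      proof (cases "v \<in> V")
        case True
        have d: "outdeg S (\<phi> v) = outdeg ?S' v" "indeg S (\<phi> v) = indeg ?S' v"
          using deg_image[OF S'V inj True] hS by auto
        have "indeg S (\<phi> v) = outdeg S (\<phi> v)" using S unfolding eulerian_sub_def by blast
        thus ?thesis using d by simp
      next
        case False
        thus ?thesis using deg_outside[OF S'V False] by simp
      qed
      moreover have "card ?S' = card S"
      proof -
        have "card (?h ` ?S') = card ?S'" by (rule card_image[OF inj_on_subset[OF ih S'V]])
        thus ?thesis using hS by simp
      qed
      ultimately have "eulerian_sub T' ?S'" "P (card ?S')" using S unfolding eulerian_sub_def by auto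
      hence "?S' \<in> {S'. eulerian_sub T' S' \<and> P (card S')}" by simp
      thus "S \<in> (`) ?h ` {S'. eulerian_sub T' S' \<and> P (card S')}" by (rule rev_image_eqI) (use hS in simp)
    qed
  qed
  have "inj_on ((`) ?h) {S'. eulerian_sub T' S' \<and> P (card S')}"
  proof (rule inj_on_subset[OF inj_on_image_Pow[OF ih]])
    show "{S'. eulerian_sub T' S' \<and> P (card S')} \<subseteq> Pow (V \<times> V)" using T'V unfolding eulerian_sub_def by auto
  qed
  hence "card ((`) ?h ` {S'. eulerian_sub T' S' \<and> P (card S')}) = card {S'. eulerian_sub T' S' \<and> P (card S')}"
    by (rule card_image)
  thus ?thesis using img by simp
qed


lemma K_AT:
  assumes t: "1 \<le> t" and E1: "E1 \<subseteq> EK t"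
  shows "\<exists>T. orientation E1 T \<and> (\<forall>v\<in>VK t. outdeg T v \<le> t - 1) \<and>
     card {S. eulerian_sub T S \<and> even (card S)} \<noteq> card {S. eulerian_sub T S \<and> odd (card S)}"
proof (rule extract_ori[OF wf_EK ori_RK E1 finite_VK EK_sub])
  have "(\<Sum>z\<in>PiE (VK t) (\<lambda>v. {0..t-1}). (\<Prod>(a,b)\<in>RK t. real (z a) - real (z b)) / (\<Prod>v\<in>VK t. gg (t-1) (z v)))
       = (\<Sum>Q\<in>{Q. orientation (EK t) Q \<and> (\<forall>v\<in>VK t. outdeg Q v = t-1)}. (-1::real)^card (Q - RK t))"
    by (rule coeff_formula[OF wf_EK ori_RK finite_VK EK_sub sum_d_K])
  moreover have "0 < (\<Sum>z\<in>PiE (VK t) (\<lambda>v. {0..t-1}). (\<Prod>(a,b)\<in>RK t. real (z a) - real (z b)) / (\<Prod>v\<in>VK t. gg (t-1) (z v)))"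
    using FK_pos[OF t] unfolding FK_def .
  ultimately show "(\<Sum>Q\<in>{Q. orientation (EK t) Q \<and> (\<forall>v\<in>VK t. outdeg Q v = t-1)}. (-1::real)^card (Q - RK t)) \<noteq> 0"
    by simp
qed

lemma graph_edge: "graph V E \<Longrightarrow> {u,v} \<in> E \<Longrightarrow> u \<in> V \<and> v \<in> V \<and> u \<noteq> v"
  unfolding graph_def by (metis doubleton_eq_iff)

lemma transfer_AT:
  assumes g: "graph V E" and inj: "inj_on \<phi> V"
    and oT: "orientation ((\<lambda>e. \<phi> ` e) ` E) T" and deg: "\<forall>v\<in>V. int (outdeg T (\<phi> v)) < f v"
    and ne: "card {S. eulerian_sub T S \<and> even (card S)} \<noteq> card {S. eulerian_sub T S \<and> odd (card S)}"
  shows "f_AT V E f"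
proof -
  let ?E1 = "(\<lambda>e. \<phi> ` e) ` E"
  let ?h = "map_prod \<phi> \<phi>"
  define T' where "T' = {(u,v). u \<in> V \<and> v \<in> V \<and> (\<phi> u, \<phi> v) \<in> T}"
  have edgesV: "\<forall>e\<in>E. e \<subseteq> V" using g unfolding graph_def by auto
  have TW: "x \<in> \<phi> ` V \<and> y \<in> \<phi> ` V" if "(x,y) \<in> T" for x y
  proof -
    have "{x,y} \<in> ?E1" using ori_edge[OF oT that] .
    then obtain e where e: "e \<in> E" "{x,y} = \<phi> ` e" by auto
    have "\<phi> ` e \<subseteq> \<phi> ` V" using edgesV e(1) by (intro image_mono) auto
    moreover have "x \<in> \<phi> ` e" "y \<in> \<phi> ` e" using e(2) by (metis insertI1, metis insertI1 insert_commute)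
    ultimately show ?thesis by auto
  qed
  have T'V: "T' \<subseteq> V \<times> V" unfolding T'_def by auto
  have TT: "T = ?h ` T'"
  proof
    show "?h ` T' \<subseteq> T" unfolding T'_def by auto
    show "T \<subseteq> ?h ` T'"
    proof
      fix p assume p: "p \<in> T"
      obtain x y where xy: "p = (x,y)" by (cases p)
      obtain u where u: "u \<in> V" "x = \<phi> u" using TW[of x y] p xy by auto
      obtain v where v: "v \<in> V" "y = \<phi> v" using TW[of x y] p xy by auto
      have "(u,v) \<in> T'" unfolding T'_def using u v p xy by simp
      thus "p \<in> ?h ` T'" using xy u v by (intro rev_image_eqI[of "(u,v)"]) auto
    qed
  qed
  have oT': "orientation E T'"
    unfolding orientation_def
  proof (rule conjI; intro allI impI)
    fix u v assume uv: "(u,v) \<in> T'"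
    hence uvV: "u \<in> V" "v \<in> V" and inT: "(\<phi> u, \<phi> v) \<in> T" unfolding T'_def by auto
    have "{\<phi> u, \<phi> v} \<in> ?E1" using ori_edge[OF oT inT] .
    then obtain e where e: "e \<in> E" "{\<phi> u, \<phi> v} = \<phi> ` e" by auto
    have eV: "e \<subseteq> V" using edgesV e(1) by auto
    have im: "\<phi> ` e = \<phi> ` {u,v}" using e(2) by simp
    have uvsub: "{u,v} \<subseteq> V" using uvV by auto
    have "e = {u,v}" using iffD1[OF inj_on_image_eq_iff[OF inj eV uvsub] im] .
    hence "{u,v} \<in> E" using e(1) by simp
    moreover have "(v,u) \<notin> T'" using ori_asym[OF oT inT] unfolding T'_def by auto
    ultimately show "{u,v} \<in> E \<and> (v,u) \<notin> T'" by simp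
  next
    fix u v assume uv: "{u,v} \<in> E"
    hence uvV: "u \<in> V" "v \<in> V" using graph_edge[OF g] by auto
    have "{\<phi> u, \<phi> v} = \<phi> ` {u,v}" by simp
    hence "{\<phi> u, \<phi> v} \<in> ?E1" using uv by (metis image_eqI)
    hence "(\<phi> u, \<phi> v) \<in> T \<or> (\<phi> v, \<phi> u) \<in> T" using ori_cover[OF oT] by blast
    thus "(u,v) \<in> T' \<or> (v,u) \<in> T'" unfolding T'_def using uvV by auto
  qed
  have degT': "outdeg T' v = outdeg T (\<phi> v)" if "v \<in> V" for v
    using deg_image[OF T'V inj that] TT by simp
  have ce: "card {S'. eulerian_sub T' S' \<and> even (card S')} = card {S. eulerian_sub T S \<and> even (card S)}"
    by (rule euler_count_transfer[OF inj T'V TT])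
  have co: "card {S'. eulerian_sub T' S' \<and> odd (card S')} = card {S. eulerian_sub T S \<and> odd (card S)}"
    by (rule euler_count_transfer[OF inj T'V TT])
  have "AT_orientation V E f T'"
    unfolding AT_orientation_def using oT' degT' deg ce co ne by auto
  thus ?thesis unfolding f_AT_def by blast
qed

lemma part1:
  assumes g: "graph V E" and t: "1 \<le> t" and sg: "subgraph_K2t V E t"
  shows "f_AT V E (\<lambda>_. int t)"
proof -
  obtain \<phi> :: "'a \<Rightarrow> nat \<times> nat" where inj: "inj_on \<phi> V" and img: "\<phi> ` V \<subseteq> {0..<t} \<times> {0..<2}"
    and parts: "\<forall>u v. {u, v} \<in> E \<longrightarrow> fst (\<phi> u) \<noteq> fst (\<phi> v)"
    using sg unfolding subgraph_K2t_def by blast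
  let ?E1 = "(\<lambda>e. \<phi> ` e) ` E"
  have E1: "?E1 \<subseteq> EK t"
  proof
    fix e1 assume "e1 \<in> ?E1"
    then obtain e where e: "e \<in> E" "e1 = \<phi> ` e" by auto
    obtain u v where uv: "e = {u,v}" "u \<noteq> v" "u \<in> V" "v \<in> V" using g e(1) unfolding graph_def by blast
    have "\<phi> u \<in> VK t" "\<phi> v \<in> VK t" using img uv unfolding VK_def by auto
    moreover have "fst (\<phi> u) \<noteq> fst (\<phi> v)" using parts e(1) uv(1) by blast
    ultimately have "{\<phi> u, \<phi> v} \<in> EK t" by (rule EK_I)
    thus "e1 \<in> EK t" using e(2) uv(1) by simp
  qed
  obtain T where oT: "orientation ?E1 T" and dT: "\<forall>v\<in>VK t. outdeg T v \<le> t - 1"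
    and ne: "card {S. eulerian_sub T S \<and> even (card S)} \<noteq> card {S. eulerian_sub T S \<and> odd (card S)}"
    using K_AT[OF t E1] by blast
  have "\<forall>v\<in>V. int (outdeg T (\<phi> v)) < int t"
  proof
    fix v assume "v \<in> V"
    hence "\<phi> v \<in> VK t" using img unfolding VK_def by auto
    thus "int (outdeg T (\<phi> v)) < int t" using dT t by fastforce
  qed
  thus ?thesis by (rule transfer_AT[OF g inj oT _ ne])
qed

lemma part2:
  assumes g: "graph V E" and bk: "BK_free V E"
  shows "\<not> subgraph_K2t V E (maxdeg V E - 1)"
proof
  assume sg: "subgraph_K2t V E (maxdeg V E - 1)"
  let ?t = "maxdeg V E - 1"
  have Vne: "V \<noteq> {}" using bk unfolding BK_free_def connected_graph_def by auto
  have t1: "1 \<le> ?t"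
  proof (rule ccontr)
    assume "\<not> 1 \<le> ?t"
    hence "?t = 0" by simp
    then obtain \<phi> :: "'a \<Rightarrow> nat \<times> nat" where "\<phi> ` V \<subseteq> {0..<0} \<times> {0..<2}"
      using sg unfolding subgraph_K2t_def by auto
    thus False using Vne by auto
  qed
  have at: "f_AT V E (\<lambda>_. int ?t)" using part1[OF g t1 sg] .
  have ind: "induced_edges E V = E" using g unfolding induced_edges_def graph_def by auto
  have fh: "(\<lambda>v. int (Defs.degree (induced_edges E V) v) - 1 + int (maxdeg V E) - int (Defs.degree E v)) = (\<lambda>_. int ?t)"
    using t1 unfolding ind by (auto simp: of_nat_diff)
  have "\<exists>W. W \<subseteq> V \<and> W \<noteq> {} \<and>
          (let EH = induced_edges E W;
               fH = (\<lambda>v. int (Defs.degree EH v) - 1 + int (maxdeg V E) - int (Defs.degree E v))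
           in f_AT W EH fH \<or> f_KP W EH fH)"
    using Vne at fh ind by (intro exI[of _ V]) (simp add: Let_def)
  thus False using bk unfolding BK_free_def by blast
qed

theorem mainTheorem3:
  fixes V :: "'a set" and E :: "'a set set" and t :: nat
  assumes "graph V E"
  shows "(1 \<le> t \<and> subgraph_K2t V E t \<longrightarrow> f_AT V E (\<lambda>_. int t)) \<and>
         (BK_free V E \<longrightarrow> \<not> subgraph_K2t V E (maxdeg V E - 1))"
  using part1[OF assms] part2[OF assms] by blast


end
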